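(* Let $R\subset S$ be an $M$-crucial ring extension such that the natural map $R(X)\otimes_RS\to S(X)$ is an isomorphism (for example, if $R\subset S$ is integral or a flat epimorphism). Then $R(X)\subset S(X)$ is $MR(X)$-crucial.
   Context: Rings are commutative and unital. For a ring $A$, its Nagata ring $A(X)$ is the localization of the polynomial ring $A[X]$ at the multiplicative set of polynomials whose content (ideal generated by the coefficients) is $A$. A ring extension $A\subset B$ is $N$-crucial if $\mathrm{Supp}_A(B/A)=\{P\in\mathrm{Spec}(A)\mid A_P\neq B_P\}=\{N\}$ (then $N$ is maximal). *)

theory Defs
  imports "HOL-Computational_Algebra.Polynomial"
begin

definition subring_of :: "'a::{comm_ring,monoid_mult} set \<Rightarrow> bool" where
  "subring_of A \<longleftrightarrow> 0 \<in> A \<and> 1 \<in> A \<and> (\<forall>x\<in>A. \<forall>y\<in>A. x + y \<in> A \<and> x * y \<in> A \<and> - x \<in> A)"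

definition ideal_in :: "'a::comm_ring set \<Rightarrow> 'a set \<Rightarrow> bool" where
  "ideal_in A I \<longleftrightarrow> I \<subseteq> A \<and> 0 \<in> I \<and> (\<forall>x\<in>I. \<forall>y\<in>I. x + y \<in> I \<and> - x \<in> I)
     \<and> (\<forall>a\<in>A. \<forall>x\<in>I. a * x \<in> I)"

definition prime_ideal_in :: "'a::comm_ring set \<Rightarrow> 'a set \<Rightarrow> bool" where
  "prime_ideal_in A P \<longleftrightarrow> ideal_in A P \<and> P \<noteq> A \<and> (\<forall>a\<in>A. \<forall>b\<in>A. a * b \<in> P \<longrightarrow> a \<in> P \<or> b \<in> P)"

definition gen_ideal_in :: "'a::comm_ring set \<Rightarrow> 'a set \<Rightarrow> 'a set" where
  "gen_ideal_in A X = \<Inter>{I. ideal_in A I \<and> X \<subseteq> I}"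

text \<open>Support of the A-module B/A for a subring A of the ring B = UNIV:
  the primes P of A with (B/A)_P \<noteq> 0, i.e. with some class b + A whose image in
  (B/A)_P is nonzero, i.e. not killed by any s \<in> A - P.\<close>
definition supp_ext :: "'a::comm_ring set \<Rightarrow> 'a set set" where
  "supp_ext A = {P. prime_ideal_in A P \<and> (\<exists>b. \<forall>s\<in>A - P. s * b \<notin> A)}"

definition crucial :: "'a::comm_ring set \<Rightarrow> 'a set \<Rightarrow> bool" where
  "crucial A N \<longleftrightarrow> supp_ext A = {N}"

text \<open>The content of g (ideal of A generated by the coefficients of g) equals A.\<close>
definition content_unit_in :: "'a::comm_ring_1 set \<Rightarrow> 'a poly \<Rightarrow> bool" where
  "content_unit_in A g \<longleftrightarrow> (\<forall>i. coeff g i \<in> A) \<and>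
     (\<exists>a. (\<forall>i. a i \<in> A) \<and> (\<Sum>i\<le>degree g. a i * coeff g i) = 1)"

section \<open>The Nagata ring S(X) of a ring S (the type 'a)\<close>

text \<open>Multiplicative monoid generated by the content-one polynomials (it coincides with
  the set of content-one polynomials, which is multiplicatively closed).\<close>
inductive_set nag_den :: "'a::comm_ring_1 poly set" where
  one: "1 \<in> nag_den"
| mult: "content_unit_in UNIV g \<Longrightarrow> h \<in> nag_den \<Longrightarrow> g * h \<in> nag_den"

lemma nag_den_mult: "g \<in> nag_den \<Longrightarrow> h \<in> nag_den \<Longrightarrow> g * h \<in> nag_den"
  by (induction g rule: nag_den.induct) (auto simp: mult.assoc intro: nag_den.mult)

definition nag_rel :: "('a::comm_ring_1 poly \<times> 'a poly) \<Rightarrow> ('a poly \<times> 'a poly) \<Rightarrow> bool" where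
  "nag_rel p q \<longleftrightarrow> snd p \<in> nag_den \<and> snd q \<in> nag_den \<and>
     (\<exists>h\<in>nag_den. h * (fst p * snd q - fst q * snd p) = 0)"

lemma nag_rel_part_equivp: "part_equivp (nag_rel :: 'a::comm_ring_1 poly \<times> 'a poly \<Rightarrow> _)"
proof (rule part_equivpI)
  show "\<exists>x. nag_rel x x"
    by (rule exI[of _ "(0, 1)"]) (auto simp: nag_rel_def intro: nag_den.one)
  show "symp nag_rel"
    unfolding symp_def nag_rel_def
    by (auto simp: algebra_simps) (metis mult.commute)
  show "transp nag_rel"
  proof (rule transpI)
    fix x y z
    assume xy: "nag_rel x y" and yz: "nag_rel y z"
    obtain a b where x: "x = (a, b)" by fastforce
    obtain c d where y: "y = (c, d)" by fastforce
    obtain e f where z: "z = (e, f)" by fastforce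
    obtain h k where d: "b \<in> nag_den" "d \<in> nag_den" "f \<in> nag_den" "h \<in> nag_den" "k \<in> nag_den"
      and 1: "h * (a * d - c * b) = 0" and 2: "k * (c * f - e * d) = 0"
      using xy yz unfolding x y z nag_rel_def by auto
    have "(h * k * d) * (a * f - e * b) =
          (k * f) * (h * (a * d - c * b)) + (h * b) * (k * (c * f - e * d))"
      by (simp add: algebra_simps)
    also have "\<dots> = 0" using 1 2 by simp
    finally have "(h * k * d) * (a * f - e * b) = 0" .
    moreover have "h * k * d \<in> nag_den" using d by (meson nag_den_mult)
    ultimately show "nag_rel x z"
      unfolding x z nag_rel_def using d by auto
  qed
qed

quotient_type (overloaded) 'a nagata = "'a::comm_ring_1 poly \<times> 'a poly" / partial: nag_rel
  by (rule nag_rel_part_equivp)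

instantiation nagata :: (comm_ring_1) "{zero, one, plus, times, uminus, minus}"
begin

lift_definition zero_nagata :: "'a nagata" is "(0, 1)"
  by (auto simp: nag_rel_def intro: nag_den.one)

lift_definition one_nagata :: "'a nagata" is "(1, 1)"
  by (auto simp: nag_rel_def intro: nag_den.one)

lift_definition plus_nagata :: "'a nagata \<Rightarrow> 'a nagata \<Rightarrow> 'a nagata"
  is "\<lambda>(a, b) (c, d). (a * d + c * b, b * d)"
proof (clarify)
  fix a b c d a' b' c' d' :: "'a poly"
  assume r1: "nag_rel (a, b) (a', b')" and r2: "nag_rel (c, d) (c', d')"
  then obtain h k where hk: "h \<in> nag_den" "k \<in> nag_den" "h * (a * b' - a' * b) = 0"
    "k * (c * d' - c' * d) = 0" and den: "b \<in> nag_den" "b' \<in> nag_den" "d \<in> nag_den" "d' \<in> nag_den"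
    by (auto simp: nag_rel_def)
  have "(h * k) * ((a * d + c * b) * (b' * d') - (a' * d' + c' * b') * (b * d)) =
        (k * d * d') * (h * (a * b' - a' * b)) + (h * b * b') * (k * (c * d' - c' * d))"
    by (simp add: algebra_simps)
  also have "\<dots> = 0" using hk by simp
  finally show "nag_rel (a * d + c * b, b * d) (a' * d' + c' * b', b' * d')"
    unfolding nag_rel_def using hk den by (auto intro: nag_den_mult)
qed

lift_definition times_nagata :: "'a nagata \<Rightarrow> 'a nagata \<Rightarrow> 'a nagata"
  is "\<lambda>(a, b) (c, d). (a * c, b * d)"
proof (clarify)
  fix a b c d a' b' c' d' :: "'a poly"
  assume r1: "nag_rel (a, b) (a', b')" and r2: "nag_rel (c, d) (c', d')"
  then obtain h k where hk: "h \<in> nag_den" "k \<in> nag_den" "h * (a * b' - a' * b) = 0"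
    "k * (c * d' - c' * d) = 0" and den: "b \<in> nag_den" "b' \<in> nag_den" "d \<in> nag_den" "d' \<in> nag_den"
    by (auto simp: nag_rel_def)
  have "(h * k) * ((a * c) * (b' * d') - (a' * c') * (b * d)) =
        (k * c * d') * (h * (a * b' - a' * b)) + (h * a' * b) * (k * (c * d' - c' * d))"
    by (simp add: algebra_simps)
  also have "\<dots> = 0" using hk by simp
  finally show "nag_rel (a * c, b * d) (a' * c', b' * d')"
    unfolding nag_rel_def using hk den by (auto intro: nag_den_mult)
qed

lift_definition uminus_nagata :: "'a nagata \<Rightarrow> 'a nagata"
  is "\<lambda>(a, b). (- a, b)"
proof (clarify)
  fix a b a' b' :: "'a poly"
  assume "nag_rel (a, b) (a', b')"
  then obtain h where "h \<in> nag_den" "h * (a * b' - a' * b) = 0" "b \<in> nag_den" "b' \<in> nag_den"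
    by (auto simp: nag_rel_def)
  then show "nag_rel (- a, b) (- a', b')"
    unfolding nag_rel_def by (auto intro!: bexI[of _ h] simp: algebra_simps)
qed

definition minus_nagata :: "'a nagata \<Rightarrow> 'a nagata \<Rightarrow> 'a nagata" where
  "minus_nagata x y = x + (- y)"

instance ..
end

lemma nag_rel_eqI:
  "b \<in> nag_den \<Longrightarrow> d \<in> nag_den \<Longrightarrow> a * d = c * b \<Longrightarrow> nag_rel (a, b) (c, d)"
  unfolding nag_rel_def by (auto intro!: bexI[of _ 1] nag_den.one)

lemma nag_rel_dom: "nag_rel p p \<longleftrightarrow> snd p \<in> nag_den"
  unfolding nag_rel_def by (auto intro!: bexI[of _ 1] nag_den.one)

instance nagata :: (comm_ring_1) "{comm_ring, comm_monoid_mult}"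
proof
  fix a b c :: "'a nagata"
  show "a * b * c = a * (b * c)"
    by transfer (auto intro!: nag_rel_eqI nag_den_mult simp: nag_rel_dom algebra_simps)
  show "a * b = b * a"
    by transfer (auto intro!: nag_rel_eqI nag_den_mult simp: nag_rel_dom algebra_simps)
  show "1 * a = a"
    by transfer (auto intro!: nag_rel_eqI nag_den_mult simp: nag_rel_dom algebra_simps)
  show "a + b + c = a + (b + c)"
    by transfer (auto intro!: nag_rel_eqI nag_den_mult simp: nag_rel_dom algebra_simps)
  show "a + b = b + a"
    by transfer (auto intro!: nag_rel_eqI nag_den_mult simp: nag_rel_dom algebra_simps)
  show "0 + a = a"
    by transfer (auto intro!: nag_rel_eqI nag_den_mult simp: nag_rel_dom algebra_simps)
  show "- a + a = 0"
    by transfer (auto intro!: nag_rel_eqI nag_den_mult nag_den.one simp: nag_rel_dom algebra_simps)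
  show "a - b = a + - b"
    by (simp add: minus_nagata_def)
  show "(a + b) * c = a * c + b * c"
    by transfer (auto intro!: nag_rel_eqI nag_den_mult simp: nag_rel_dom algebra_simps)
qed

definition nag_frac :: "'a::comm_ring_1 poly \<Rightarrow> 'a poly \<Rightarrow> 'a nagata" where
  "nag_frac f g = abs_nagata (if g \<in> nag_den then (f, g) else (0, 1))"

definition nag_of :: "'a::comm_ring_1 \<Rightarrow> 'a nagata" where
  "nag_of s = nag_frac [:s:] 1"

text \<open>The Nagata ring R(X) of a subring R \<subseteq> S, viewed (via the canonical injection) inside S(X).\<close>
definition nagata_of :: "'a::comm_ring_1 set \<Rightarrow> 'a nagata set" where
  "nagata_of R = {nag_frac f g | f g. (\<forall>i. coeff f i \<in> R) \<and> content_unit_in R g}"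

text \<open>Formal Z-linear combinations of pairs (r, s) with r \<in> R(X), s \<in> S (free abelian group).\<close>
definition free_comb :: "'a::comm_ring_1 set \<Rightarrow> ('a nagata \<times> 'a \<Rightarrow> int) set" where
  "free_comb R = {u. finite {p. u p \<noteq> 0} \<and> (\<forall>p. u p \<noteq> 0 \<longrightarrow> fst p \<in> nagata_of R)}"

definition delta :: "'b \<Rightarrow> 'b \<Rightarrow> int" where
  "delta p = (\<lambda>q. if q = p then 1 else 0)"

text \<open>Subgroup of bilinearity / R-balancedness relations defining R(X) \<otimes>_R S.\<close>
inductive_set tensor_rels :: "'a::comm_ring_1 set \<Rightarrow> ('a nagata \<times> 'a \<Rightarrow> int) set"
  for R :: "'a set" where
  zero: "(\<lambda>_. 0) \<in> tensor_rels R"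
| add_left: "r \<in> nagata_of R \<Longrightarrow> r' \<in> nagata_of R \<Longrightarrow>
     (\<lambda>q. delta (r + r', s) q - delta (r, s) q - delta (r', s) q) \<in> tensor_rels R"
| add_right: "r \<in> nagata_of R \<Longrightarrow>
     (\<lambda>q. delta (r, s + s') q - delta (r, s) q - delta (r, s') q) \<in> tensor_rels R"
| balanced: "r \<in> nagata_of R \<Longrightarrow> a \<in> R \<Longrightarrow>
     (\<lambda>q. delta (r * nag_of a, s) q - delta (r, a * s) q) \<in> tensor_rels R"
| plus: "u \<in> tensor_rels R \<Longrightarrow> v \<in> tensor_rels R \<Longrightarrow> (\<lambda>q. u q + v q) \<in> tensor_rels R"
| neg: "u \<in> tensor_rels R \<Longrightarrow> (\<lambda>q. - u q) \<in> tensor_rels R"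

text \<open>Image of a formal combination under r \<otimes> s \<mapsto> r \<cdot> s.\<close>
definition tensor_eval :: "('a::comm_ring_1 nagata \<times> 'a \<Rightarrow> int) \<Rightarrow> 'a nagata" where
  "tensor_eval u = (\<Sum>p\<in>{p. u p \<noteq> 0}. fst p * nag_of (of_int (u p) * snd p))"

text \<open>The natural map R(X) \<otimes>_R S \<rightarrow> S(X) (S = UNIV) is an isomorphism: the induced map
  from the quotient free_comb / tensor_rels is surjective and injective.\<close>
definition nagata_tensor_iso :: "'a::comm_ring_1 set \<Rightarrow> bool" where
  "nagata_tensor_iso R \<longleftrightarrow>
     (\<forall>\<xi>::'a nagata. \<exists>u\<in>free_comb R. tensor_eval u = \<xi>) \<and>
     (\<forall>u\<in>free_comb R. tensor_eval u = 0 \<longrightarrow> u \<in> tensor_rels R)"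

end

theory Submission
  imports Defs
begin

lemma mccoy:
  fixes h :: "'a::comm_ring_1 poly"
  assumes hc: "content_unit_in UNIV h"
  shows "h * q = 0 \<Longrightarrow> q = 0"
proof (induction "degree q" arbitrary: q rule: less_induct)
  case less
  show ?case
  proof (rule ccontr)
    assume q0: "q \<noteq> 0"
    obtain a where a: "(\<Sum>i\<le>degree h. a i * coeff h i) = 1"
      using hc unfolding content_unit_in_def by blast
    show False
    proof (cases "\<forall>k. smult (coeff h k) q = 0")
      case True
      have "coeff h k * lead_coeff q = 0" for k
        using arg_cong[OF True[rule_format, of k], of "\<lambda>p. coeff p (degree q)"] by simp
      then have "(\<Sum>i\<le>degree h. a i * coeff h i) * lead_coeff q = 0"
        by (simp add: sum_distrib_right mult.assoc)
      then have "lead_coeff q = 0" using a by simp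
      then show False using q0 by simp
    next
      case False
      define K where "K = {k. smult (coeff h k) q \<noteq> 0}"
      have Ksub: "K \<subseteq> {..degree h}"
      proof
        fix k assume "k \<in> K"
        then have "coeff h k \<noteq> 0" unfolding K_def by auto
        then show "k \<in> {..degree h}" using le_degree by auto
      qed
      have finK: "finite K" using Ksub finite_subset by blast
      have Kne: "K \<noteq> {}" using False K_def by auto
      define i where "i = Max K"
      have iK: "i \<in> K" using finK Kne i_def Max_in by blast
      have above: "smult (coeff h k) q = 0" if "k > i" for k
        using that finK Max_ge i_def K_def by (metis (mono_tags, lifting) leD mem_Collect_eq)
      define hlo where "hlo = (\<Sum>k\<le>i. monom (coeff h k) k)"
      have chlo: "coeff hlo k = (if k \<le> i then coeff h k else 0)" for k
        unfolding hlo_def by (simp add: coeff_sum coeff_monom)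
      define hhi where "hhi = h - hlo"
      have chhi: "coeff hhi k = (if k \<le> i then 0 else coeff h k)" for k
        unfolding hhi_def by (simp add: chlo)
      have "hhi * q = 0"
      proof (rule poly_eqI)
        fix n
        have "coeff hhi j * coeff q (n - j) = 0" for j
        proof (cases "j \<le> i")
          case True then show ?thesis by (simp add: chhi)
        next
          case False
          then have "smult (coeff h j) q = 0" using above by simp
          then have "coeff h j * coeff q (n - j) = 0"
            by (metis coeff_smult coeff_0)
          then show ?thesis using False by (simp add: chhi)
        qed
        then show "coeff (hhi * q) n = coeff 0 n" by (simp add: coeff_mult)
      qed
      then have hloq: "hlo * q = 0" using less.prems unfolding hhi_def
        by (simp add: algebra_simps)
      have ci: "coeff h i \<noteq> 0" using iK K_def by auto
      have dlo: "degree hlo = i"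
      proof (rule antisym)
        show "degree hlo \<le> i" by (rule degree_le) (simp add: chlo)
        show "i \<le> degree hlo" using ci by (intro le_degree) (simp add: chlo)
      qed
      have "coeff (hlo * q) (degree hlo + degree q) = lead_coeff hlo * lead_coeff q"
        by (rule coeff_mult_degree_sum)
      then have kill: "coeff h i * lead_coeff q = 0" using hloq dlo by (simp add: chlo)
      define q' where "q' = smult (coeff h i) q"
      have q'0: "q' \<noteq> 0" using iK K_def q'_def by auto
      have "degree q' \<le> degree q" unfolding q'_def by (rule degree_smult_le)
      moreover have "coeff q' (degree q) = 0" using kill q'_def by simp
      ultimately have "degree q' < degree q" using q'0
        by (metis le_neq_implies_less leading_coeff_0_iff)
      moreover have "h * q' = 0" using less.prems unfolding q'_def
        by (metis mult_smult_right smult_0_right)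
      ultimately have "q' = 0" using less.hyps by blast
      then show False using q'0 by simp
    qed
  qed
qed

lemma nag_den_reg:
  fixes g :: "'a::comm_ring_1 poly"
  shows "g \<in> nag_den \<Longrightarrow> g * q = 0 \<Longrightarrow> q = 0"
proof (induction g arbitrary: q rule: nag_den.induct)
  case one then show ?case by simp
next
  case (mult g h)
  then have "h * q = 0" using mccoy[OF mult.hyps(1), of "h * q"] by (simp add: mult.assoc)
  then show ?case using mult.IH by blast
qed

lemma content_unit_den: "content_unit_in R g \<Longrightarrow> g \<in> nag_den"
proof -
  assume "content_unit_in R g"
  then have "content_unit_in UNIV g" unfolding content_unit_in_def by auto
  then have "g * 1 \<in> nag_den" by (intro nag_den.mult nag_den.one)
  then show ?thesis by simp
qed

lemma nf_abs: "b \<in> nag_den \<Longrightarrow> nag_frac a b = abs_nagata (a, b)"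
  unfolding nag_frac_def by simp

lemma nf_eq:
  assumes "b \<in> nag_den" "d \<in> nag_den"
  shows "nag_frac a b = nag_frac c d \<longleftrightarrow> a * d = c * b"
proof -
  have "nag_frac a b = nag_frac c d \<longleftrightarrow> nag_rel (a, b) (c, d)"
    using assms Quotient3_rel[OF Quotient3_nagata, of "(a,b)" "(c,d)"]
    by (simp add: nf_abs nag_rel_dom)
  also have "\<dots> \<longleftrightarrow> a * d = c * b"
    using assms nag_den_reg[of _ "a * d - c * b"] unfolding nag_rel_def
    by (auto intro!: bexI[of _ 1] nag_den.one)
  finally show ?thesis .
qed

lemma nf_add:
  assumes "b \<in> nag_den" "d \<in> nag_den"
  shows "nag_frac a b + nag_frac c d = nag_frac (a * d + c * b) (b * d)"
  using assms by (simp add: nf_abs nag_den_mult plus_nagata.abs_eq nag_rel_dom)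

lemma nf_mult:
  assumes "b \<in> nag_den" "d \<in> nag_den"
  shows "nag_frac a b * nag_frac c d = nag_frac (a * c) (b * d)"
  using assms by (simp add: nf_abs nag_den_mult times_nagata.abs_eq nag_rel_dom)

lemma nf_uminus:
  assumes "b \<in> nag_den"
  shows "- nag_frac a b = nag_frac (- a) b"
  using assms by (simp add: nf_abs uminus_nagata.abs_eq nag_rel_dom)

lemma nf_zero: "0 = nag_frac 0 1"
  by (simp add: nf_abs nag_den.one zero_nagata.abs_eq)

lemma nf_one: "1 = nag_frac 1 1"
  by (simp add: nf_abs nag_den.one one_nagata.abs_eq)

lemma sr_0: "subring_of R \<Longrightarrow> 0 \<in> R" unfolding subring_of_def by auto
lemma sr_1: "subring_of R \<Longrightarrow> 1 \<in> R" unfolding subring_of_def by auto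
lemma sr_add: "subring_of R \<Longrightarrow> x \<in> R \<Longrightarrow> y \<in> R \<Longrightarrow> x + y \<in> R" unfolding subring_of_def by auto
lemma sr_mult: "subring_of R \<Longrightarrow> x \<in> R \<Longrightarrow> y \<in> R \<Longrightarrow> x * y \<in> R" unfolding subring_of_def by auto
lemma sr_neg: "subring_of R \<Longrightarrow> x \<in> R \<Longrightarrow> - x \<in> R" unfolding subring_of_def by auto
lemma sr_diff: "subring_of R \<Longrightarrow> x \<in> R \<Longrightarrow> y \<in> R \<Longrightarrow> x - y \<in> R"
  using sr_add sr_neg by (metis diff_conv_add_uminus)
lemma sr_sum: "subring_of R \<Longrightarrow> (\<And>x. x \<in> S \<Longrightarrow> f x \<in> R) \<Longrightarrow> sum f S \<in> R"
  by (induction S rule: infinite_finite_induct) (auto simp: sr_0 sr_add)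
lemma sr_prod: "subring_of (R::'a::comm_ring_1 set) \<Longrightarrow> (\<And>x. x \<in> S \<Longrightarrow> f x \<in> R) \<Longrightarrow> prod f S \<in> R"
  by (induction S rule: infinite_finite_induct) (auto simp: sr_1 sr_mult)

lemma id_sub: "ideal_in R I \<Longrightarrow> x \<in> I \<Longrightarrow> x \<in> R" unfolding ideal_in_def by auto
lemma id_0: "ideal_in R I \<Longrightarrow> 0 \<in> I" unfolding ideal_in_def by auto
lemma id_add: "ideal_in R I \<Longrightarrow> x \<in> I \<Longrightarrow> y \<in> I \<Longrightarrow> x + y \<in> I" unfolding ideal_in_def by auto
lemma id_neg: "ideal_in R I \<Longrightarrow> x \<in> I \<Longrightarrow> - x \<in> I" unfolding ideal_in_def by auto
lemma id_diff: "ideal_in R I \<Longrightarrow> x \<in> I \<Longrightarrow> y \<in> I \<Longrightarrow> x - y \<in> I"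
  using id_add id_neg by (metis diff_conv_add_uminus)
lemma id_multL: "ideal_in R I \<Longrightarrow> a \<in> R \<Longrightarrow> x \<in> I \<Longrightarrow> a * x \<in> I" unfolding ideal_in_def by auto
lemma id_multR: "ideal_in R I \<Longrightarrow> a \<in> R \<Longrightarrow> x \<in> I \<Longrightarrow> x * a \<in> I"
  using id_multL by (metis mult.commute)
lemma id_sum: "ideal_in R I \<Longrightarrow> (\<And>x. x \<in> S \<Longrightarrow> f x \<in> I) \<Longrightarrow> sum f S \<in> I"
  by (induction S rule: infinite_finite_induct) (auto simp: id_0 id_add)
lemma id_one: "ideal_in (R::'a::comm_ring_1 set) I \<Longrightarrow> 1 \<in> I \<Longrightarrow> x \<in> R \<Longrightarrow> x \<in> I"
  using id_multL[of R I x 1] by simp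

lemma prime_1: "prime_ideal_in (R::'a::comm_ring_1 set) P \<Longrightarrow> subring_of R \<Longrightarrow> 1 \<notin> P"
  unfolding prime_ideal_in_def using id_one id_sub by blast

lemma zorn_prime:
  fixes R :: "'a::comm_ring_1 set"
  assumes sr: "subring_of R" and I: "ideal_in R I" and n1: "1 \<notin> I"
  shows "\<exists>P. prime_ideal_in R P \<and> I \<subseteq> P"
proof -
  define A where "A = {J. ideal_in R J \<and> I \<subseteq> J \<and> 1 \<notin> J}"
  have "\<forall>C\<in>chains A. \<exists>U\<in>A. \<forall>X\<in>C. X \<subseteq> U"
  proof
    fix C assume C: "C \<in> chains A"
    show "\<exists>U\<in>A. \<forall>X\<in>C. X \<subseteq> U"
    proof (cases "C = {}")
      case True then show ?thesis using I n1 A_def by auto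
    next
      case False
      then obtain J0 where J0: "J0 \<in> C" by auto
      have CA: "C \<subseteq> A" using C chainsD2 by blast
      have "ideal_in R (\<Union>C)"
        unfolding ideal_in_def
      proof (intro conjI ballI)
        show "\<Union>C \<subseteq> R" using CA A_def id_sub by fastforce
        show "0 \<in> \<Union>C" using J0 CA A_def id_0 by fastforce
      next
        fix x y assume "x \<in> \<Union>C" "y \<in> \<Union>C"
        then obtain X Y where XY: "X \<in> C" "Y \<in> C" "x \<in> X" "y \<in> Y" by auto
        then have "X \<subseteq> Y \<or> Y \<subseteq> X" using chainsD[OF C] by blast
        then show "x + y \<in> \<Union>C"
        proof
          assume "X \<subseteq> Y"
          then have "x + y \<in> Y" using XY CA A_def id_add by blast
          then show ?thesis using XY by blast
        next
          assume "Y \<subseteq> X"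
          then have "x + y \<in> X" using XY CA A_def id_add by blast
          then show ?thesis using XY by blast
        qed
      next
        fix x assume "x \<in> \<Union>C"
        then obtain X where "X \<in> C" "x \<in> X" by auto
        then show "- x \<in> \<Union>C" using CA A_def id_neg by fastforce
      next
        fix a x assume "a \<in> R" "x \<in> \<Union>C"
        then obtain X where "X \<in> C" "x \<in> X" by auto
        then show "a * x \<in> \<Union>C" using \<open>a \<in> R\<close> CA A_def id_multL by fastforce
      qed
      moreover have "I \<subseteq> \<Union>C" using J0 CA A_def by auto
      moreover have "1 \<notin> \<Union>C" using CA A_def by auto
      ultimately show ?thesis unfolding A_def by blast
    qed
  qed
  then obtain P where PA: "P \<in> A" and Pmax: "\<forall>X\<in>A. P \<subseteq> X \<longrightarrow> X = P"
    using Zorn_Lemma2 by blast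
  have PI: "ideal_in R P" "I \<subseteq> P" "1 \<notin> P" using PA A_def by auto
  have "prime_ideal_in R P"
    unfolding prime_ideal_in_def
  proof (intro conjI ballI impI)
    show "ideal_in R P" by fact
    show "P \<noteq> R" using PI sr_1[OF sr] by auto
  next
    fix a b assume ab: "a \<in> R" "b \<in> R" "a * b \<in> P"
    show "a \<in> P \<or> b \<in> P"
    proof (cases "a \<in> P")
      case True then show ?thesis by simp
    next
      case False note aP = False
      define J where "J = {m + c * a | m c. m \<in> P \<and> c \<in> R}"
      have JI: "ideal_in R J"
        unfolding ideal_in_def
      proof (intro conjI ballI)
        show "J \<subseteq> R" unfolding J_def using ab PI id_sub sr sr_add sr_mult by blast
        show "0 \<in> J" unfolding J_def
          by (intro CollectI exI[of _ 0] exI[of _ 0]) (simp add: id_0[OF PI(1)] sr_0[OF sr])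
      next
        fix x y assume "x \<in> J" "y \<in> J"
        then obtain m c m' c' where "x = m + c * a" "y = m' + c' * a" "m \<in> P" "c \<in> R" "m' \<in> P" "c' \<in> R"
          unfolding J_def by auto
        then have "x + y = (m + m') + (c + c') * a" "m + m' \<in> P" "c + c' \<in> R"
          by (auto simp: algebra_simps id_add[OF PI(1)] sr_add[OF sr])
        then show "x + y \<in> J" unfolding J_def by blast
      next
        fix x assume "x \<in> J"
        then obtain m c where "x = m + c * a" "m \<in> P" "c \<in> R" unfolding J_def by auto
        then have "- x = (- m) + (- c) * a" "- m \<in> P" "- c \<in> R"
          by (auto simp: algebra_simps id_neg[OF PI(1)] sr_neg[OF sr])
        then show "- x \<in> J" unfolding J_def by blast
      next
        fix r x assume r: "r \<in> R" and "x \<in> J"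
        then obtain m c where "x = m + c * a" "m \<in> P" "c \<in> R" unfolding J_def by auto
        then have "r * x = (r * m) + (r * c) * a" "r * m \<in> P" "r * c \<in> R"
          using r by (auto simp: algebra_simps id_multL[OF PI(1)] id_multR[OF PI(1)] sr_mult[OF sr])
        then show "r * x \<in> J" unfolding J_def by blast
      qed
      have PJ: "P \<subseteq> J" unfolding J_def using sr_0[OF sr] by force
      have aJ: "a \<in> J" unfolding J_def using sr_1[OF sr] id_0[OF PI(1)] by force
      have "1 \<in> J"
      proof (rule ccontr)
        assume "1 \<notin> J"
        then have "J \<in> A" using JI PJ PI A_def by auto
        then have "J = P" using Pmax PJ by blast
        then show False using aJ aP by simp
      qed
      then obtain m c where mc: "1 = m + c * a" "m \<in> P" "c \<in> R" unfolding J_def by auto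
      have "b = b * m + c * (a * b)" using mc(1) by (metis mult.commute mult.left_commute mult_1 distrib_left)
      moreover have "b * m \<in> P" using id_multL[OF PI(1) ab(2) mc(2)] .
      moreover have "c * (a * b) \<in> P" using id_multL[OF PI(1) mc(3) ab(3)] .
      ultimately have "b \<in> P" using id_add[OF PI(1)] by metis
      then show ?thesis by simp
    qed
  qed
  then show ?thesis using PI by blast
qed

definition polyin :: "'a::comm_ring_1 set \<Rightarrow> 'a poly \<Rightarrow> bool" where
  "polyin R f \<longleftrightarrow> (\<forall>i. coeff f i \<in> R)"

lemma polyin_add: "subring_of R \<Longrightarrow> polyin R f \<Longrightarrow> polyin R g \<Longrightarrow> polyin R (f + g)"
  unfolding polyin_def by (simp add: sr_add)
lemma polyin_neg: "subring_of R \<Longrightarrow> polyin R f \<Longrightarrow> polyin R (- f)"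
  unfolding polyin_def by (simp add: sr_neg)
lemma polyin_diff: "subring_of R \<Longrightarrow> polyin R f \<Longrightarrow> polyin R g \<Longrightarrow> polyin R (f - g)"
  unfolding polyin_def by (simp add: sr_diff)
lemma polyin_mult: "subring_of R \<Longrightarrow> polyin R f \<Longrightarrow> polyin R g \<Longrightarrow> polyin R (f * g)"
  unfolding polyin_def by (simp add: coeff_mult sr_sum sr_mult)
lemma polyin_monom: "subring_of R \<Longrightarrow> r \<in> R \<Longrightarrow> polyin R (monom r n)"
  unfolding polyin_def by (simp add: coeff_monom sr_0)
lemma polyin_const: "subring_of R \<Longrightarrow> r \<in> R \<Longrightarrow> polyin R [:r:]"
  unfolding polyin_def by (simp add: coeff_pCons sr_0 split: nat.split)
lemma polyin_0: "subring_of R \<Longrightarrow> polyin R 0"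
  unfolding polyin_def by (simp add: sr_0)
lemma polyin_1: "subring_of R \<Longrightarrow> polyin R 1"
  unfolding polyin_def by (simp add: sr_0 sr_1 coeff_1)

lemma polyid_mult:
  assumes "ideal_in R I" "\<forall>i. coeff f i \<in> I" "polyin R g"
  shows "\<forall>i. coeff (f * g) i \<in> I"
  using assms unfolding polyin_def by (simp add: coeff_mult id_sum id_multR)

lemma polyid_mult2:
  assumes "ideal_in R I" "polyin R f" "\<forall>i. coeff g i \<in> I"
  shows "\<forall>i. coeff (f * g) i \<in> I"
  using polyid_mult[OF assms(1,3,2)] by (simp add: mult.commute)

lemma gauss:
  fixes R :: "'a::comm_ring_1 set"
  assumes P: "prime_ideal_in R P" and f: "polyin R f" and g: "polyin R g"
    and fP: "\<exists>i. coeff f i \<notin> P" and gP: "\<exists>j. coeff g j \<notin> P"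
  shows "\<exists>k. coeff (f * g) k \<notin> P"
proof -
  have I: "ideal_in R P" using P prime_ideal_in_def by blast
  define i0 where "i0 = (LEAST i. coeff f i \<notin> P)"
  define j0 where "j0 = (LEAST j. coeff g j \<notin> P)"
  have fi0: "coeff f i0 \<notin> P" using fP i0_def by (metis LeastI)
  have gj0: "coeff g j0 \<notin> P" using gP j0_def by (metis LeastI)
  have fb: "coeff f i \<in> P" if "i < i0" for i using that i0_def not_less_Least by blast
  have gb: "coeff g j \<in> P" if "j < j0" for j using that j0_def not_less_Least by blast
  define n where "n = i0 + j0"
  have rest: "(\<Sum>k\<in>{..n} - {i0}. coeff f k * coeff g (n - k)) \<in> P"
  proof (rule id_sum[OF I])
    fix k assume k: "k \<in> {..n} - {i0}"
    show "coeff f k * coeff g (n - k) \<in> P"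
    proof (cases "k < i0")
      case True then show ?thesis using fb g id_multR[OF I] polyin_def by blast
    next
      case False
      then have "n - k < j0" using k n_def by auto
      then show ?thesis using gb f id_multL[OF I] polyin_def by blast
    qed
  qed
  have "coeff (f * g) n = coeff f i0 * coeff g (n - i0) + (\<Sum>k\<in>{..n} - {i0}. coeff f k * coeff g (n - k))"
    unfolding coeff_mult by (rule sum.remove) (auto simp: n_def)
  moreover have "n - i0 = j0" using n_def by simp
  ultimately have eq: "coeff f i0 * coeff g j0 = coeff (f * g) n - (\<Sum>k\<in>{..n} - {i0}. coeff f k * coeff g (n - k))"
    by simp
  show ?thesis
  proof (rule ccontr)
    assume "\<not> ?thesis"
    then have "coeff (f * g) n \<in> P" by blast
    then have "coeff f i0 * coeff g j0 \<in> P" using eq rest id_diff[OF I] by metis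
    then show False using P fi0 gj0 f g unfolding prime_ideal_in_def polyin_def by blast
  qed
qed

lemma cu_polyin: "content_unit_in R g \<Longrightarrow> polyin R g"
  unfolding content_unit_in_def polyin_def by blast

lemma cu_not_in:
  assumes I: "ideal_in R I" and n1: "1 \<notin> I" and g: "content_unit_in R g"
  shows "\<exists>i. coeff g i \<notin> I"
proof (rule ccontr)
  assume "\<not> ?thesis"
  then have all: "coeff g i \<in> I" for i by blast
  obtain a where a: "\<forall>i. a i \<in> R" "(\<Sum>i\<le>degree g. a i * coeff g i) = 1"
    using g unfolding content_unit_in_def by blast
  have "(\<Sum>i\<le>degree g. a i * coeff g i) \<in> I"
    using a all id_multL[OF I] by (intro id_sum[OF I]) blast
  then show False using a n1 by simp
qed

lemma cu_alt:
  assumes sr: "subring_of R" and g: "polyin R g" and a: "\<forall>i. a i \<in> R"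
    and s: "(\<Sum>i\<le>n. a i * coeff g i) = 1"
  shows "content_unit_in R g"
proof -
  define a' where "a' i = (if i \<le> n then a i else 0)" for i
  define m where "m = max n (degree g)"
  have "(\<Sum>i\<le>degree g. a' i * coeff g i) = (\<Sum>i\<le>m. a' i * coeff g i)"
    by (rule sum.mono_neutral_left) (auto simp: m_def coeff_eq_0)
  also have "\<dots> = (\<Sum>i\<le>n. a' i * coeff g i)"
    by (rule sum.mono_neutral_right) (auto simp: m_def a'_def)
  also have "\<dots> = 1" using s by (simp add: a'_def)
  finally show ?thesis
    unfolding content_unit_in_def using g a sr_0[OF sr]
    by (intro conjI exI[of _ a']) (auto simp: polyin_def a'_def)
qed

lemma cu_mult:
  fixes R :: "'a::comm_ring_1 set"
  assumes sr: "subring_of R" and g: "content_unit_in R g" and h: "content_unit_in R h"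
  shows "content_unit_in R (g * h)"
proof -
  define p where "p = g * h"
  have pR: "polyin R p" using polyin_mult[OF sr cu_polyin[OF g] cu_polyin[OF h]] p_def by simp
  define T where "T = {(\<Sum>i\<le>degree p. a i * coeff p i) | a. \<forall>i. a i \<in> R}"
  have TI: "ideal_in R T"
    unfolding ideal_in_def
  proof (intro conjI ballI)
    show "T \<subseteq> R" unfolding T_def using pR
      by (auto intro!: sr_sum[OF sr] sr_mult[OF sr] simp: polyin_def)
    show "0 \<in> T" unfolding T_def using sr_0[OF sr]
      by (auto intro!: exI[of _ "\<lambda>_. 0"])
  next
    fix x y assume "x \<in> T" "y \<in> T"
    then obtain a b where "x = (\<Sum>i\<le>degree p. a i * coeff p i)" "\<forall>i. a i \<in> R"
      "y = (\<Sum>i\<le>degree p. b i * coeff p i)" "\<forall>i. b i \<in> R" unfolding T_def by auto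
    then have "x + y = (\<Sum>i\<le>degree p. (a i + b i) * coeff p i)" "\<forall>i. a i + b i \<in> R"
      by (auto simp: sum.distrib algebra_simps sr_add[OF sr])
    then show "x + y \<in> T" unfolding T_def by (auto intro!: exI[of _ "\<lambda>i. a i + b i"])
  next
    fix x assume "x \<in> T"
    then obtain a where "x = (\<Sum>i\<le>degree p. a i * coeff p i)" "\<forall>i. a i \<in> R" unfolding T_def by auto
    then have "- x = (\<Sum>i\<le>degree p. (- a i) * coeff p i)" "\<forall>i. - a i \<in> R"
      by (auto simp: sum_negf sr_neg[OF sr])
    then show "- x \<in> T" unfolding T_def by (auto intro!: exI[of _ "\<lambda>i. - a i"])
  next
    fix r x assume r: "r \<in> R" and "x \<in> T"
    then obtain a where "x = (\<Sum>i\<le>degree p. a i * coeff p i)" "\<forall>i. a i \<in> R" unfolding T_def by auto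
    then have "r * x = (\<Sum>i\<le>degree p. (r * a i) * coeff p i)" "\<forall>i. r * a i \<in> R"
      using r by (auto simp: sum_distrib_left mult.assoc sr_mult[OF sr])
    then show "r * x \<in> T" unfolding T_def by (auto intro!: exI[of _ "\<lambda>i. r * a i"])
  qed
  show ?thesis
  proof (cases "1 \<in> T")
    case True
    then obtain a where "\<forall>i. a i \<in> R" "(\<Sum>i\<le>degree p. a i * coeff p i) = 1" unfolding T_def by auto
    then show ?thesis unfolding content_unit_in_def p_def using pR p_def polyin_def by metis
  next
    case False
    then obtain P where P: "prime_ideal_in R P" "T \<subseteq> P" using zorn_prime[OF sr TI] by blast
    have PI: "ideal_in R P" "1 \<notin> P" using P prime_1[OF P(1) sr] prime_ideal_in_def by auto
    have cT: "coeff p j \<in> T" for j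
    proof (cases "j \<le> degree p")
      case True
      define a :: "nat \<Rightarrow> 'a" where "a i = (if i = j then 1 else 0)" for i
      have "(\<Sum>i\<le>degree p. a i * coeff p i) = coeff p j"
      proof -
        have "(\<Sum>i\<le>degree p. a i * coeff p i) = (\<Sum>i\<le>degree p. if i = j then coeff p i else 0)"
          by (rule sum.cong) (auto simp: a_def)
        also have "\<dots> = coeff p j" using True by (simp add: sum.delta)
        finally show ?thesis .
      qed
      moreover have "\<forall>i. a i \<in> R" using sr_0[OF sr] sr_1[OF sr] a_def by auto
      ultimately show ?thesis unfolding T_def by (auto intro!: exI[of _ a])
    next
      case False
      then have "coeff p j = 0" by (simp add: coeff_eq_0)
      then show ?thesis using TI id_0 by metis
    qed
    have "\<exists>k. coeff (g * h) k \<notin> P"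
      using gauss[OF P(1) cu_polyin[OF g] cu_polyin[OF h] cu_not_in[OF PI g] cu_not_in[OF PI h]] .
    then show ?thesis using cT P(2) p_def by auto
  qed
qed

lemma cu_one: "subring_of R \<Longrightarrow> content_unit_in R 1"
  unfolding content_unit_in_def
  by (intro conjI exI[of _ "\<lambda>_. 1"]) (auto simp: sr_0 sr_1 coeff_1)

lemma nf_add_same: "b \<in> nag_den \<Longrightarrow> nag_frac a b + nag_frac c b = nag_frac (a + c) b"
  by (simp add: nf_add nf_eq nag_den_mult algebra_simps)

lemma nag_of_add: "nag_of (r + s) = nag_of r + nag_of s"
  unfolding nag_of_def by (simp add: nf_add_same nag_den.one)
lemma nag_of_mult: "nag_of (r * s) = nag_of r * nag_of s"
  unfolding nag_of_def by (simp add: nf_mult nag_den.one mult.commute)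
lemma nag_of_neg: "nag_of (- r) = - nag_of r"
  unfolding nag_of_def by (simp add: nf_uminus nag_den.one)
lemma nag_of_0: "nag_of 0 = 0"
  unfolding nag_of_def by (simp add: nf_zero)
lemma nag_of_1: "nag_of 1 = 1"
  unfolding nag_of_def by (simp add: nf_one pCons_one)

lemma prime_prod:
  fixes R :: "'a::comm_ring_1 set"
  assumes sr: "subring_of R" and P: "prime_ideal_in R P"
  shows "finite S \<Longrightarrow> (\<And>x. x \<in> S \<Longrightarrow> f x \<in> R \<and> f x \<notin> P) \<Longrightarrow> prod f S \<in> R \<and> prod f S \<notin> P"
proof (induction S rule: finite_induct)
  case empty then show ?case using prime_1[OF P sr] sr_1[OF sr] by simp
next
  case (insert x F)
  then have "prod f F \<in> R" "prod f F \<notin> P" "f x \<in> R" "f x \<notin> P" by auto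
  moreover have "f x * prod f F \<notin> P"
    using P \<open>prod f F \<in> R\<close> \<open>prod f F \<notin> P\<close> \<open>f x \<in> R\<close> \<open>f x \<notin> P\<close>
    unfolding prime_ideal_in_def by blast
  ultimately show ?case using insert sr_mult[OF sr] by simp
qed

lemma lin_ideal:
  fixes R :: "'a::comm_ring_1 set"
  assumes sr: "subring_of R" and PI: "ideal_in R P" and a: "a \<in> R"
  shows "ideal_in R {m + c * a | m c. m \<in> P \<and> c \<in> R}" (is "ideal_in R ?J")
  unfolding ideal_in_def
proof (intro conjI ballI)
  show "?J \<subseteq> R"
  proof
    fix x assume "x \<in> ?J"
    then obtain m c where "x = m + c * a" "m \<in> P" "c \<in> R" by auto
    then show "x \<in> R" using a id_sub[OF PI] sr_add[OF sr] sr_mult[OF sr] by simp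
  qed
  show "0 \<in> ?J"
    by (intro CollectI exI[of _ 0] exI[of _ 0]) (simp add: id_0[OF PI] sr_0[OF sr])
next
  fix x y assume "x \<in> ?J" "y \<in> ?J"
  then obtain m c m' c' where "x = m + c * a" "y = m' + c' * a" "m \<in> P" "c \<in> R" "m' \<in> P" "c' \<in> R"
    by auto
  then have "x + y = (m + m') + (c + c') * a" "m + m' \<in> P" "c + c' \<in> R"
    by (auto simp: algebra_simps id_add[OF PI] sr_add[OF sr])
  then show "x + y \<in> ?J" by blast
next
  fix x assume "x \<in> ?J"
  then obtain m c where "x = m + c * a" "m \<in> P" "c \<in> R" by auto
  then have "- x = (- m) + (- c) * a" "- m \<in> P" "- c \<in> R"
    by (auto simp: algebra_simps id_neg[OF PI] sr_neg[OF sr])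
  then show "- x \<in> ?J" by blast
next
  fix r x assume r: "r \<in> R" and "x \<in> ?J"
  then obtain m c where "x = m + c * a" "m \<in> P" "c \<in> R" by auto
  then have "r * x = (r * m) + (r * c) * a"
    by (simp add: algebra_simps)
  moreover have "r * m \<in> P" using id_multL[OF PI r \<open>m \<in> P\<close>] .
  moreover have "r * c \<in> R" using sr_mult[OF sr r \<open>c \<in> R\<close>] .
  ultimately show "r * x \<in> ?J" by blast
qed


context
  fixes R :: "'a::comm_ring_1 set"
  assumes sr: "subring_of R"
begin

lemma nA_mem: "polyin R f \<Longrightarrow> content_unit_in R g \<Longrightarrow> nag_frac f g \<in> nagata_of R"
  unfolding nagata_of_def polyin_def by blast

lemma nA_elim: "x \<in> nagata_of R \<Longrightarrow> \<exists>f g. x = nag_frac f g \<and> polyin R f \<and> content_unit_in R g"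
  unfolding nagata_of_def polyin_def by blast

lemma nA_add: "x \<in> nagata_of R \<Longrightarrow> y \<in> nagata_of R \<Longrightarrow> x + y \<in> nagata_of R"
proof -
  assume "x \<in> nagata_of R" "y \<in> nagata_of R"
  then obtain f g f' g' where "x = nag_frac f g" "polyin R f" "content_unit_in R g"
    "y = nag_frac f' g'" "polyin R f'" "content_unit_in R g'" using nA_elim by metis
  then show ?thesis
    by (simp add: nf_add content_unit_den nA_mem polyin_add[OF sr] polyin_mult[OF sr] cu_mult[OF sr] cu_polyin)
qed

lemma nA_mult: "x \<in> nagata_of R \<Longrightarrow> y \<in> nagata_of R \<Longrightarrow> x * y \<in> nagata_of R"
proof -
  assume "x \<in> nagata_of R" "y \<in> nagata_of R"
  then obtain f g f' g' where "x = nag_frac f g" "polyin R f" "content_unit_in R g"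
    "y = nag_frac f' g'" "polyin R f'" "content_unit_in R g'" using nA_elim by metis
  then show ?thesis
    by (simp add: nf_mult content_unit_den nA_mem polyin_mult[OF sr] cu_mult[OF sr])
qed

lemma nA_neg: "x \<in> nagata_of R \<Longrightarrow> - x \<in> nagata_of R"
  by (auto dest!: nA_elim simp: nf_uminus content_unit_den intro!: nA_mem polyin_neg[OF sr])

lemma nA_0: "0 \<in> nagata_of R"
  by (simp add: nf_zero nA_mem polyin_0[OF sr] cu_one[OF sr])

lemma nA_1: "1 \<in> nagata_of R"
  by (simp add: nf_one nA_mem polyin_1[OF sr] cu_one[OF sr])

lemma nA_of: "r \<in> R \<Longrightarrow> nag_of r \<in> nagata_of R"
  unfolding nag_of_def by (simp add: nA_mem polyin_const[OF sr] cu_one[OF sr])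

lemma nA_sum: "(\<And>x. x \<in> S \<Longrightarrow> f x \<in> nagata_of R) \<Longrightarrow> sum f S \<in> nagata_of R"
  by (induction S rule: infinite_finite_induct) (auto simp: nA_0 nA_add)

lemma nA_subring: "subring_of (nagata_of R)"
  unfolding subring_of_def using nA_0 nA_1 nA_add nA_mult nA_neg by blast

lemma nA_ideal: "ideal_in (nagata_of R) (nagata_of R)"
  unfolding ideal_in_def using nA_0 nA_add nA_mult nA_neg by blast

end

definition Nset :: "'a::comm_ring_1 set \<Rightarrow> 'a set \<Rightarrow> 'a nagata set" where
  "Nset R M = {nag_frac f g | f g. polyin M f \<and> content_unit_in R g}"

lemma polyM_add: "ideal_in R M \<Longrightarrow> polyin M f \<Longrightarrow> polyin M g \<Longrightarrow> polyin M (f + g)"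
  unfolding polyin_def by (simp add: id_add)
lemma polyM_neg: "ideal_in R M \<Longrightarrow> polyin M f \<Longrightarrow> polyin M (- f)"
  unfolding polyin_def by (simp add: id_neg)
lemma polyM_multR: "ideal_in R M \<Longrightarrow> polyin M f \<Longrightarrow> polyin R g \<Longrightarrow> polyin M (f * g)"
  using polyid_mult unfolding polyin_def by blast
lemma polyM_multL: "ideal_in R M \<Longrightarrow> polyin R g \<Longrightarrow> polyin M f \<Longrightarrow> polyin M (g * f)"
  using polyM_multR by (metis mult.commute)
lemma polyM_R: "ideal_in R M \<Longrightarrow> polyin M f \<Longrightarrow> polyin R f"
  unfolding polyin_def using id_sub by blast

context
  fixes R M :: "'a::comm_ring_1 set"
  assumes sr: "subring_of R" and cr: "crucial R M"
begin

lemma M_supp: "M \<in> supp_ext R" using cr unfolding crucial_def by auto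
lemma M_prime: "prime_ideal_in R M" using M_supp unfolding supp_ext_def by auto
lemma M_ideal: "ideal_in R M" using M_prime unfolding prime_ideal_in_def by auto
lemma M_1: "1 \<notin> M" using prime_1[OF M_prime sr] .
lemma M_b: "\<exists>b. \<forall>s\<in>R - M. s * b \<notin> R" using M_supp unfolding supp_ext_def by auto
lemma supp_M: "P \<in> supp_ext R \<Longrightarrow> P = M" using cr unfolding crucial_def by auto

lemma M_max:
  assumes r: "r \<in> R" "r \<notin> M"
  shows "\<exists>m c. 1 = m + c * r \<and> m \<in> M \<and> c \<in> R"
proof -
  define J where "J = {m + c * r | m c. m \<in> M \<and> c \<in> R}"
  have JI: "ideal_in R J" unfolding J_def by (rule lin_ideal[OF sr M_ideal r(1)])
  have "1 \<in> J"
  proof (rule ccontr)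
    assume "1 \<notin> J"
    then obtain P where P: "prime_ideal_in R P" "J \<subseteq> P" using zorn_prime[OF sr JI] by blast
    have MJ: "M \<subseteq> J"
    proof
      fix x assume "x \<in> M"
      then have "x = x + 0 * r" "x \<in> M" "(0::'a) \<in> R" using sr_0[OF sr] by auto
      then show "x \<in> J" unfolding J_def by blast
    qed
    have rJ: "r \<in> J"
    proof -
      have "r = 0 + 1 * r" "(0::'a) \<in> M" "(1::'a) \<in> R" using sr_1[OF sr] id_0[OF M_ideal] by auto
      then show ?thesis unfolding J_def by blast
    qed
    obtain b where b: "\<forall>s\<in>R - M. s * b \<notin> R" using M_b by blast
    have "P \<in> supp_ext R" unfolding supp_ext_def using P MJ b by blast
    then have "P = M" by (rule supp_M)
    then show False using rJ P r by blast
  qed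
  then show ?thesis unfolding J_def by blast
qed

lemma N_ideal: "ideal_in (nagata_of R) (Nset R M)"
  unfolding ideal_in_def
proof (intro conjI ballI)
  show "Nset R M \<subseteq> nagata_of R"
    unfolding Nset_def using nA_mem[OF sr] polyM_R[OF M_ideal] by blast
  have "(0::'a nagata) = nag_frac 0 1" by (rule nf_zero)
  moreover have "polyin M (0::'a poly)" using id_0[OF M_ideal] by (simp add: polyin_def)
  ultimately show "0 \<in> Nset R M" unfolding Nset_def using cu_one[OF sr] by blast
next
  fix x y assume "x \<in> Nset R M" "y \<in> Nset R M"
  then obtain f g f' g' where fg: "x = nag_frac f g" "polyin M f" "content_unit_in R g"
    "y = nag_frac f' g'" "polyin M f'" "content_unit_in R g'" unfolding Nset_def by blast
  then have "x + y = nag_frac (f * g' + f' * g) (g * g')"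
    by (simp add: nf_add content_unit_den)
  moreover have "polyin M (f * g' + f' * g)"
    using polyM_add[OF M_ideal polyM_multR[OF M_ideal fg(2) cu_polyin[OF fg(6)]]
        polyM_multR[OF M_ideal fg(5) cu_polyin[OF fg(3)]]] .
  moreover have "content_unit_in R (g * g')" using fg cu_mult[OF sr] by blast
  ultimately show "x + y \<in> Nset R M" unfolding Nset_def by blast
next
  fix x assume "x \<in> Nset R M"
  then obtain f g where fg: "x = nag_frac f g" "polyin M f" "content_unit_in R g"
    unfolding Nset_def by blast
  then have "- x = nag_frac (- f) g" by (simp add: nf_uminus content_unit_den)
  then show "- x \<in> Nset R M" unfolding Nset_def using fg polyM_neg[OF M_ideal] by blast
next
  fix a x assume "a \<in> nagata_of R" "x \<in> Nset R M"
  obtain f g where fg1: "a = nag_frac f g" "polyin R f" "content_unit_in R g"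
    using nA_elim[OF sr \<open>a \<in> nagata_of R\<close>] by blast
  obtain f' g' where fg2: "x = nag_frac f' g'" "polyin M f'" "content_unit_in R g'"
    using \<open>x \<in> Nset R M\<close> unfolding Nset_def by blast
  note fg = fg1 fg2
  then have "a * x = nag_frac (f * f') (g * g')"
    by (simp add: nf_mult content_unit_den)
  moreover have "polyin M (f * f')" using fg polyM_multL[OF M_ideal] by blast
  moreover have "content_unit_in R (g * g')" using fg cu_mult[OF sr] by blast
  ultimately show "a * x \<in> Nset R M" unfolding Nset_def by blast
qed

lemma N_gen: "nag_of ` M \<subseteq> Nset R M"
proof
  fix x assume "x \<in> nag_of ` M"
  then obtain m where m: "m \<in> M" "x = nag_of m" by auto
  have "polyin M [:m:]" using m id_0[OF M_ideal]
    by (simp add: polyin_def coeff_pCons split: nat.split)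
  moreover have "x = nag_frac [:m:] 1" using m nag_of_def by simp
  ultimately show "x \<in> Nset R M" unfolding Nset_def using cu_one[OF sr] by blast
qed

lemma N_sub:
  assumes I: "ideal_in (nagata_of R) I" and gen: "nag_of ` M \<subseteq> I"
  shows "Nset R M \<subseteq> I"
proof
  fix x assume "x \<in> Nset R M"
  then obtain f g where fg: "x = nag_frac f g" "polyin M f" "content_unit_in R g"
    unfolding Nset_def by blast
  have gd: "g \<in> nag_den" using fg content_unit_den by blast
  have "polyin M p \<longrightarrow> nag_frac p g \<in> I" for p
  proof (induction p rule: pCons_induct)
    case 0
    have "nag_frac 0 g = nag_frac 0 1" using nf_eq[OF gd nag_den.one] by simp
    then show ?case using id_0[OF I] nf_zero by metis
  next
    case (pCons a p)
    show ?case
    proof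
      assume pa: "polyin M (pCons a p)"
      then have aM: "a \<in> M" unfolding polyin_def by (metis coeff_pCons_0)
      have pM: "polyin M p" using pa unfolding polyin_def by (metis coeff_pCons_Suc)
      have "pCons a p = [:a:] + pCons 0 p" by simp
      then have e1: "nag_frac (pCons a p) g = nag_frac [:a:] g + nag_frac (pCons 0 p) g"
        using nf_add_same[OF gd, of "[:a:]" "pCons 0 p"] by simp
      have e2: "nag_frac [:a:] g = nag_frac 1 g * nag_of a"
        unfolding nag_of_def using nf_mult[OF gd nag_den.one] by simp
      have e3: "nag_frac (pCons 0 p) g = nag_frac [:0,1:] 1 * nag_frac p g"
        using nf_mult[OF nag_den.one gd] by simp
      have m1: "nag_frac 1 g \<in> nagata_of R"
        using nA_mem[OF sr polyin_1[OF sr] fg(3)] .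
      have m2: "nag_frac [:0,1:] 1 \<in> nagata_of R"
      proof -
        have "polyin R [:0,1:]" using sr_0[OF sr] sr_1[OF sr]
          by (simp add: polyin_def coeff_pCons split: nat.split)
        then show ?thesis using nA_mem[OF sr _ cu_one[OF sr]] by blast
      qed
      have m3: "nag_of a \<in> I" using aM gen by blast
      have m4: "nag_frac p g \<in> I" using pCons.IH pM by blast
      have "nag_frac 1 g * nag_of a + nag_frac [:0,1:] 1 * nag_frac p g \<in> I"
        by (rule id_add[OF I id_multL[OF I m1 m3] id_multL[OF I m2 m4]])
      then show "nag_frac (pCons a p) g \<in> I" unfolding e1 e2 e3 .
    qed
  qed
  then show "x \<in> I" using fg by blast
qed

lemma N_eq: "gen_ideal_in (nagata_of R) (nag_of ` M) = Nset R M"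
  unfolding gen_ideal_in_def
  using N_ideal N_gen N_sub by blast

lemma N_notin:
  assumes "content_unit_in R g" "nag_frac f g \<notin> Nset R M"
  shows "\<exists>i. coeff f i \<notin> M"
  using assms unfolding Nset_def polyin_def by blast

lemma N_1: "1 \<notin> Nset R M"
proof
  assume "1 \<in> Nset R M"
  then obtain f g where fg: "1 = nag_frac f g" "polyin M f" "content_unit_in R g"
    unfolding Nset_def by blast
  then have "nag_frac 1 1 = nag_frac f g" using nf_one by simp
  then have "1 * g = f * 1" using nf_eq[OF nag_den.one content_unit_den[OF fg(3)]] by blast
  then have "g = f" by simp
  then show False using cu_not_in[OF M_ideal M_1 fg(3)] fg(2) unfolding polyin_def by blast
qed

lemma N_prime: "prime_ideal_in (nagata_of R) (Nset R M)"
  unfolding prime_ideal_in_def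
proof (intro conjI ballI impI)
  show "ideal_in (nagata_of R) (Nset R M)" by (rule N_ideal)
  show "Nset R M \<noteq> nagata_of R" using N_1 nA_1[OF sr] by blast
next
  fix a b assume a: "a \<in> nagata_of R" and b: "b \<in> nagata_of R" and ab: "a * b \<in> Nset R M"
  obtain f g where fg: "a = nag_frac f g" "polyin R f" "content_unit_in R g"
    using nA_elim[OF sr a] by blast
  obtain f' g' where fg': "b = nag_frac f' g'" "polyin R f'" "content_unit_in R g'"
    using nA_elim[OF sr b] by blast
  obtain F G where FG: "a * b = nag_frac F G" "polyin M F" "content_unit_in R G"
    using ab unfolding Nset_def by blast
  have "a * b = nag_frac (f * f') (g * g')" using fg fg' by (simp add: nf_mult content_unit_den)
  then have "nag_frac (f * f') (g * g') = nag_frac F G" using FG by simp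
  then have eq: "(f * f') * G = F * (g * g')"
    using nf_eq[OF content_unit_den[OF cu_mult[OF sr fg(3) fg'(3)]] content_unit_den[OF FG(3)]] by blast
  show "a \<in> Nset R M \<or> b \<in> Nset R M"
  proof (rule ccontr)
    assume "\<not> ?thesis"
    then have "\<exists>i. coeff f i \<notin> M" "\<exists>i. coeff f' i \<notin> M"
      using N_notin fg fg' by blast+
    then have "\<exists>k. coeff (f * f') k \<notin> M" using gauss[OF M_prime fg(2) fg'(2)] by blast
    then have "\<exists>k. coeff (f * f' * G) k \<notin> M"
      using gauss[OF M_prime polyin_mult[OF sr fg(2) fg'(2)] cu_polyin[OF FG(3)]]
        cu_not_in[OF M_ideal M_1 FG(3)] by blast
    moreover have "polyin M (F * (g * g'))"
      using polyM_multR[OF M_ideal FG(2)] polyin_mult[OF sr cu_polyin[OF fg(3)] cu_polyin[OF fg'(3)]] by blast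
    ultimately show False using eq unfolding polyin_def by metis
  qed
qed

lemma N_witness: "\<exists>\<xi>. \<forall>s\<in>nagata_of R - Nset R M. s * \<xi> \<notin> nagata_of R"
proof -
  obtain b0 where b0: "\<forall>s\<in>R - M. s * b0 \<notin> R" using M_b by blast
  have "\<forall>s\<in>nagata_of R - Nset R M. s * nag_of b0 \<notin> nagata_of R"
  proof (intro ballI notI)
    fix s assume s: "s \<in> nagata_of R - Nset R M" and sA: "s * nag_of b0 \<in> nagata_of R"
    obtain f g where fg: "s = nag_frac f g" "polyin R f" "content_unit_in R g"
      using nA_elim[OF sr] s by blast
    have fM: "\<exists>i. coeff f i \<notin> M" using N_notin fg s by blast
    obtain F G where FG: "s * nag_of b0 = nag_frac F G" "polyin R F" "content_unit_in R G"
      using nA_elim[OF sr sA] by blast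
    have "s * nag_of b0 = nag_frac (f * [:b0:]) (g * 1)"
      unfolding nag_of_def using fg by (simp add: nf_mult content_unit_den nag_den.one)
    then have "nag_frac (f * [:b0:]) (g * 1) = nag_frac F G" using FG by simp
    moreover have "g * 1 \<in> nag_den" using content_unit_den[OF fg(3)] by simp
    ultimately have eq: "f * [:b0:] * G = F * (g * 1)"
      using nf_eq[OF _ content_unit_den[OF FG(3)]] by blast
    have e2: "f * [:b0:] * G = smult b0 (f * G)" by (simp add: mult.commute mult.left_commute)
    obtain k where k: "coeff (f * G) k \<notin> M"
      using gauss[OF M_prime fg(2) cu_polyin[OF FG(3)] fM cu_not_in[OF M_ideal M_1 FG(3)]] by blast
    have kR: "coeff (f * G) k \<in> R" using polyin_mult[OF sr fg(2) cu_polyin[OF FG(3)]] polyin_def by blast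
    have "coeff (F * (g * 1)) k \<in> R"
      using polyin_mult[OF sr FG(2) polyin_mult[OF sr cu_polyin[OF fg(3)] polyin_1[OF sr]]] polyin_def by blast
    moreover have "b0 * coeff (f * G) k = coeff (F * (g * 1)) k"
      using arg_cong[OF eq[unfolded e2], of "\<lambda>p. coeff p k"] by simp
    ultimately have "coeff (f * G) k * b0 \<in> R" by (simp add: mult.commute)
    then show False using b0 k kR by blast
  qed
  then show ?thesis by blast
qed

lemma N_supp: "Nset R M \<in> supp_ext (nagata_of R)"
  unfolding supp_ext_def using N_prime N_witness by blast

end

context
  fixes R M :: "'a::comm_ring_1 set"
  assumes sr: "subring_of R" and cr: "crucial R M"
begin

lemma Q_eq:
  assumes Qs: "Q \<in> supp_ext (nagata_of R)" and iso: "nagata_tensor_iso R"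
  shows "Q = Nset R M"
proof -
  have QP: "prime_ideal_in (nagata_of R) Q" using Qs unfolding supp_ext_def by blast
  obtain \<xi> where xi: "\<forall>s\<in>nagata_of R - Q. s * \<xi> \<notin> nagata_of R"
    using Qs unfolding supp_ext_def by blast
  have QI: "ideal_in (nagata_of R) Q" using QP unfolding prime_ideal_in_def by blast
  have Q1: "1 \<notin> Q"
  proof
    assume "1 \<in> Q"
    then have "x \<in> Q" if "x \<in> nagata_of R" for x
      using id_multL[OF QI that \<open>1 \<in> Q\<close>] by simp
    moreover have "Q \<subseteq> nagata_of R" using QI unfolding ideal_in_def by blast
    ultimately have "Q = nagata_of R" by blast
    then show False using QP unfolding prime_ideal_in_def by blast
  qed
  define P where "P = {r \<in> R. nag_of r \<in> Q}"
  have PI: "ideal_in R P"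
    unfolding ideal_in_def
  proof (intro conjI ballI)
    show "P \<subseteq> R" unfolding P_def by blast
    show "0 \<in> P" unfolding P_def using sr_0[OF sr] id_0[OF QI] by (simp add: nag_of_0)
  next
    fix x y assume "x \<in> P" "y \<in> P"
    then show "x + y \<in> P" unfolding P_def using sr_add[OF sr] id_add[OF QI] by (simp add: nag_of_add)
  next
    fix x assume "x \<in> P"
    then show "- x \<in> P" unfolding P_def using sr_neg[OF sr] id_neg[OF QI] by (simp add: nag_of_neg)
  next
    fix a x assume "a \<in> R" "x \<in> P"
    then show "a * x \<in> P" unfolding P_def
      using sr_mult[OF sr] id_multL[OF QI] nA_of[OF sr] by (simp add: nag_of_mult)
  qed
  have PP: "prime_ideal_in R P"
    unfolding prime_ideal_in_def
  proof (intro conjI ballI impI)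
    show "ideal_in R P" by fact
    show "P \<noteq> R"
    proof
      assume "P = R"
      then have "nag_of 1 \<in> Q" using sr_1[OF sr] unfolding P_def by blast
      then show False using Q1 by (simp add: nag_of_1)
    qed
  next
    fix a b assume ab: "a \<in> R" "b \<in> R" "a * b \<in> P"
    then have "nag_of a * nag_of b \<in> Q" unfolding P_def by (simp add: nag_of_mult)
    then have "nag_of a \<in> Q \<or> nag_of b \<in> Q"
      using QP nA_of[OF sr ab(1)] nA_of[OF sr ab(2)] unfolding prime_ideal_in_def by blast
    then show "a \<in> P \<or> b \<in> P" unfolding P_def using ab by blast
  qed
  have Pb: "\<exists>b. \<forall>s\<in>R - P. s * b \<notin> R"
  proof (rule ccontr)
    assume "\<not> ?thesis"
    then have "\<forall>b. \<exists>s. s \<in> R \<and> s \<notin> P \<and> s * b \<in> R" by blast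
    from choice[OF this] obtain t where t': "\<forall>b. t b \<in> R \<and> t b \<notin> P \<and> t b * b \<in> R" by blast
    have t: "\<And>b. t b \<in> R \<and> t b \<notin> P \<and> t b * b \<in> R" using t' by blast
    obtain u where u: "u \<in> free_comb R" "tensor_eval u = \<xi>"
      using iso unfolding nagata_tensor_iso_def by blast
    define D where "D = {p. u p \<noteq> 0}"
    have finD: "finite D" and DA: "\<And>p. p \<in> D \<Longrightarrow> fst p \<in> nagata_of R"
      using u(1) unfolding free_comb_def D_def by auto
    define c where "c p = of_int (u p) * snd p" for p
    define T where "T = (\<Prod>p\<in>D. t (c p))"
    have TR: "T \<in> R \<and> T \<notin> P" unfolding T_def
      by (rule prime_prod[OF sr PP finD]) (use t in blast)
    have eqx: "nag_of T * \<xi> = (\<Sum>p\<in>D. fst p * nag_of (T * c p))"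
      unfolding u(2)[symmetric] tensor_eval_def D_def[symmetric] c_def[symmetric]
      by (simp add: sum_distrib_left nag_of_mult mult.commute mult.left_commute)
    have "(\<Sum>p\<in>D. fst p * nag_of (T * c p)) \<in> nagata_of R"
    proof (rule nA_sum[OF sr])
      fix p assume pD: "p \<in> D"
      have "T = t (c p) * (\<Prod>q\<in>D - {p}. t (c q))"
        unfolding T_def using prod.remove[OF finD pD] .
      then have "T * c p = (\<Prod>q\<in>D - {p}. t (c q)) * (t (c p) * c p)"
        by (simp add: mult.commute mult.left_commute)
      moreover have "(\<Prod>q\<in>D - {p}. t (c q)) \<in> R" by (rule sr_prod[OF sr]) (use t in blast)
      moreover have "t (c p) * c p \<in> R" using t by blast
      ultimately have "T * c p \<in> R" using sr_mult[OF sr] by simp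
      then show "fst p * nag_of (T * c p) \<in> nagata_of R"
        using nA_mult[OF sr DA[OF pD] nA_of[OF sr]] by blast
    qed
    then have "nag_of T * \<xi> \<in> nagata_of R" using eqx by simp
    moreover have "nag_of T \<in> nagata_of R - Q" using TR nA_of[OF sr] unfolding P_def by blast
    ultimately show False using xi by blast
  qed
  have "P \<in> supp_ext R" unfolding supp_ext_def using PP Pb by blast
  then have PM: "P = M" using supp_M[OF sr cr] by blast
  have NQ: "Nset R M \<subseteq> Q"
    using N_sub[OF sr cr QI] PM unfolding P_def by blast
  have QN: "Q \<subseteq> Nset R M"
  proof
    fix q assume qQ: "q \<in> Q"
    then have qA: "q \<in> nagata_of R" using QI unfolding ideal_in_def by blast
    obtain f g where fg: "q = nag_frac f g" "polyin R f" "content_unit_in R g"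
      using nA_elim[OF sr qA] by blast
    have gd: "g \<in> nag_den" using content_unit_den[OF fg(3)] .
    show "q \<in> Nset R M"
    proof (rule ccontr)
      assume qN: "q \<notin> Nset R M"
      then obtain i where fi: "coeff f i \<notin> M" using N_notin[OF sr cr fg(3)] fg(1) by blast
      have fiR: "coeff f i \<in> R" using fg(2) polyin_def by blast
      obtain m c where mc: "1 = m + c * coeff f i" "m \<in> M" "c \<in> R"
        using M_max[OF sr cr fiR fi] by blast
      have mR: "m \<in> R" using id_sub[OF M_ideal[OF sr cr] mc(2)] .
      have i_le: "i \<le> degree f"
        using fi id_0[OF M_ideal[OF sr cr]] by (metis le_degree)
      define n where "n = Suc (degree f)"
      define w where "w = f + monom m n"
      have wR: "polyin R w" unfolding w_def using polyin_add[OF sr fg(2) polyin_monom[OF sr mR]] .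
      define a :: "nat \<Rightarrow> 'a" where "a j = (if j = i then c else if j = n then 1 else 0)" for j
      have aR: "\<forall>j. a j \<in> R" using mc(3) sr_0[OF sr] sr_1[OF sr] unfolding a_def by auto
      have in_: "i \<noteq> n" using i_le n_def by simp
      have trm: "a j * coeff w j = (if j = i then c * coeff f i else 0) + (if j = n then m else 0)" for j
        using in_ i_le by (auto simp: a_def w_def coeff_monom n_def coeff_eq_0)
      have "(\<Sum>j\<le>n. a j * coeff w j) = (\<Sum>j\<le>n. (if j = i then c * coeff f i else 0)) + (\<Sum>j\<le>n. (if j = n then m else 0))"
        unfolding trm by (rule sum.distrib)
      also have "\<dots> = c * coeff f i + m" using i_le n_def by simp
      also have "\<dots> = 1" using mc(1) by (simp add: add.commute)
      finally have wc: "content_unit_in R w" using cu_alt[OF sr wR aR] by blast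
      have wd: "w \<in> nag_den" using content_unit_den[OF wc] .
      have mN: "nag_frac (monom m n) g \<in> Nset R M"
      proof -
        have "polyin M (monom m n)" using mc(2) id_0[OF M_ideal[OF sr cr]]
          by (simp add: polyin_def coeff_monom)
        then show ?thesis unfolding Nset_def using fg(3) by blast
      qed
      have "nag_frac w g = q + nag_frac (monom m n) g"
        unfolding w_def fg(1) using nf_add_same[OF gd] by simp
      then have wQ: "nag_frac w g \<in> Q" using id_add[OF QI qQ] mN NQ by auto
      have gwA: "nag_frac g w \<in> nagata_of R" using nA_mem[OF sr cu_polyin[OF fg(3)] wc] .
      have "nag_frac g w * nag_frac w g = nag_frac (g * w) (w * g)" using nf_mult[OF wd gd] .
      also have "\<dots> = nag_frac 1 1"
        using nf_eq[OF nag_den_mult[OF wd gd] nag_den.one] by (simp add: mult.commute)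
      also have "\<dots> = 1" using nf_one by simp
      finally have "1 \<in> Q" using id_multL[OF QI gwA wQ] by simp
      then show False using Q1 by blast
    qed
  qed
  show ?thesis using NQ QN by blast
qed

end

theorem lemma6p11:
  fixes R :: "'a::comm_ring_1 set" and M :: "'a set"
  assumes "subring_of R"
    and "crucial R M"
    and "nagata_tensor_iso R"
  shows "crucial (nagata_of R) (gen_ideal_in (nagata_of R) (nag_of ` M))"
  unfolding crucial_def N_eq[OF assms(1,2)]
  using N_supp[OF assms(1,2)] Q_eq[OF assms(1,2) _ assms(3)] by blast

end
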